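(* Let $q\ge2$ be a prime power and $n,d$ positive integers with $d<\frac{n+1}{2}$. For $0\le i\le d$ let $m_i={n\brack i}_q-{n\brack i-1}_q$ (with ${n\brack -1}_q=0$) be the multiplicities of the Grassmann scheme $Gr(n,d)$ over $\mathbb{F}_q$. Then $m_i^2\ge m_{i-1}m_{i+1}$ for all $1\le i\le d-1$.
   Context: ${n\brack i}_q=\prod_{t=0}^{i-1}\frac{q^{n-t}-1}{q^{i-t}-1}$ is the Gaussian binomial coefficient (number of $i$-dimensional subspaces of $\mathbb{F}_q^n$). The Grassmann scheme $Gr(n,d)$ is the association scheme on the $d$-dimensional subspaces of $\mathbb{F}_q^n$, with relations given by the dimension of the intersection; in the standard ($Q$-polynomial) ordering its multiplicities are $m_i={n\brack i}_q-{n\brack i-1}_q$, $0\le i\le d$. *)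

theory Defs
  imports Complex_Main "HOL-Computational_Algebra.Primes"
begin

definition gauss_binom :: "nat \<Rightarrow> nat \<Rightarrow> int \<Rightarrow> real" where
  "gauss_binom q n i = (if i < 0 then 0 else
     (\<Prod>t<nat i. (real q ^ (n - t) - 1) / (real q ^ (nat i - t) - 1)))"

definition grass_mult :: "nat \<Rightarrow> nat \<Rightarrow> int \<Rightarrow> real" where
  "grass_mult q n i = gauss_binom q n i - gauss_binom q n (i - 1)"

definition prime_power :: "nat \<Rightarrow> bool" where
  "prime_power q \<longleftrightarrow> (\<exists>p k. prime p \<and> k \<ge> 1 \<and> q = p ^ k)"

end

theory Submission
  imports Defs
begin

lemma powge1: "(x::real) \<ge> 2 \<Longrightarrow> m \<ge> 1 \<Longrightarrow> x ^ m - 1 > 0"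
proof -
  assume a: "x \<ge> 2" "m \<ge> 1"
  have "x ^ m \<ge> x ^ 1" using a by (intro power_increasing) auto
  then show ?thesis using a by auto
qed

lemma gb_nat: "gauss_binom q n (int k) =
  (\<Prod>t<k. (real q ^ (n - t) - 1)) / (\<Prod>t<k. (real q ^ (Suc t) - 1))"
proof -
  have "gauss_binom q n (int k) = (\<Prod>t<k. (real q ^ (n - t) - 1) / (real q ^ (k - t) - 1))"
    by (simp add: gauss_binom_def)
  also have "\<dots> = (\<Prod>t<k. (real q ^ (n - t) - 1)) / (\<Prod>t<k. (real q ^ (k - t) - 1))"
    by (simp add: prod_dividef)
  also have "(\<Prod>t<k. (real q ^ (k - t) - 1)) = (\<Prod>t<k. (real q ^ (Suc (k - Suc t)) - 1))"
    by (intro prod.cong refl) (metis Suc_diff_Suc lessThan_iff)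
  also have "\<dots> = (\<Prod>t<k. (real q ^ (Suc t) - 1))"
    by (rule prod.nat_diff_reindex[where g = "\<lambda>t. real q ^ Suc t - 1"])
  finally show ?thesis .
qed

lemma gb_Suc:
  assumes "q \<ge> 2"
  shows "gauss_binom q n (int (Suc k)) = gauss_binom q n (int k) * (real q ^ (n - k) - 1) / (real q ^ Suc k - 1)"
  unfolding gb_nat prod.lessThan_Suc by simp

lemma gb_pos:
  assumes "q \<ge> 2" "k \<le> n"
  shows "gauss_binom q n (int k) > 0"
proof -
  have "(\<Prod>t<k. (real q ^ (n - t) - 1)) > 0"
  proof (rule prod_pos)
    fix t assume "t \<in> {..<k}"
    then have "n - t \<ge> 1" using assms by auto
    then show "real q ^ (n - t) - 1 > 0" using assms powge1[of "real q" "n-t"] by auto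
  qed
  moreover have "(\<Prod>t<k. (real q ^ (Suc t) - 1)) > 0"
  proof (rule prod_pos)
    fix t assume "t \<in> {..<k}"
    show "real q ^ (Suc t) - 1 > 0" using assms powge1[of "real q" "Suc t"] by auto
  qed
  ultimately show ?thesis by (simp add: gb_nat)
qed

lemma gm0: "grass_mult q n 0 = 1"
  by (simp add: grass_mult_def gauss_binom_def)

lemma gm_Suc:
  assumes "q \<ge> 2" "2 * k + 1 \<le> n"
  shows "grass_mult q n (int (Suc k)) =
     gauss_binom q n (int k) * real q ^ Suc k * (real q ^ (n - 2*k - 1) - 1) / (real q ^ Suc k - 1)"
proof -
  have d: "real q ^ Suc k - 1 > 0"
    using powge1[of "real q" "Suc k"] assms by simp
  have e: "real q ^ (n - k) = real q ^ Suc k * real q ^ (n - 2*k - 1)"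
  proof -
    have "n - k = Suc k + (n - 2*k - 1)" using assms by simp
    then show ?thesis by (simp only: power_add)
  qed
  have "grass_mult q n (int (Suc k)) = gauss_binom q n (int (Suc k)) - gauss_binom q n (int k)"
    by (simp add: grass_mult_def)
  also have "\<dots> = gauss_binom q n (int k) * ((real q ^ (n - k) - 1) - (real q ^ Suc k - 1)) / (real q ^ Suc k - 1)"
    unfolding gb_Suc[OF assms(1)] using d by (simp add: field_simps)
  also have "\<dots> = gauss_binom q n (int k) * real q ^ Suc k * (real q ^ (n - 2*k - 1) - 1) / (real q ^ Suc k - 1)"
    by (simp add: e algebra_simps)
  finally show ?thesis .
qed

lemma keyineq:
  fixes x :: real assumes "x \<ge> 1"
  shows "(x ^ (b+4) - 1) * (x ^ b - 1) \<le> (x ^ (b+2) - 1)^2"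
proof -
  have "(x ^ (b+2) - 1)^2 - (x ^ (b+4) - 1) * (x ^ b - 1) = x^b * (x^2 - 1)^2"
  proof -
    have h: "\<And>y::real. (y * x^2 - 1)^2 - (y*x^4 - 1) * (y - 1) = y * (x^2 - 1)^2"
      by algebra
    show ?thesis using h[of "x^b"] by (simp only: power_add)
  qed
  moreover have "x^b * (x^2 - 1)^2 \<ge> 0" using assms by simp
  ultimately show ?thesis by linarith
qed


lemma powmono: "(x::real) \<ge> 2 \<Longrightarrow> a \<le> b \<Longrightarrow> x ^ a - 1 \<le> x ^ b - 1"
  by (simp add: power_increasing)

lemma e1: fixes g X Q Sp Sm R R' P0 P1 P2 :: real
  assumes "P0 \<noteq> 0" "P1 \<noteq> 0" "P2 \<noteq> 0"
  shows "(g*X*Sp/P0)*(g*R/P0*R'/P1*(Q*Q*X)*Sm/P2) = g^2*X^2*Q^2/(P0^2*P1^2*P2) * (R*R'*(Sp*Sm)*P1)"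
  using assms by (simp add: field_simps power2_eq_square)
lemma e2: fixes g X Q S R P0 P1 P2 :: real
  assumes "P0 \<noteq> 0" "P1 \<noteq> 0" "P2 \<noteq> 0"
  shows "(g * R / P0 * (Q*X) * S / P1)^2 = g^2*X^2*Q^2/(P0^2*P1^2*P2) * (R * R * S^2 * P2)"
  using assms by (simp add: field_simps power2_eq_square)
lemma m: fixes Sp Sm S P1 P2 :: real shows "Sp * Sm \<le> S^2 \<Longrightarrow> P1 \<le> P2 \<Longrightarrow> 0 < P1 \<Longrightarrow> 0 \<le> Sp \<Longrightarrow> 0 \<le> Sm \<Longrightarrow> (Sp * Sm) * P1 \<le> S^2 * P2"
  by (meson less_imp_le mult_mono' zero_le_mult_iff)

theorem theorem6:
  fixes q n d :: nat and i :: int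
  assumes "prime_power q" and "q \<ge> 2" and "n \<ge> 1" and "d \<ge> 1"
    and "real d < (real n + 1) / 2"
    and "1 \<le> i" and "i \<le> int d - 1"
  shows "(grass_mult q n i)^2 \<ge> grass_mult q n (i - 1) * grass_mult q n (i + 1)"
proof -
  define Q where "Q = real q"
  have Q2: "Q \<ge> 2" using assms(2) by (simp add: Q_def)
  have "real (2*d) < real (n+1)" using assms(5) by simp
  hence nd: "2 * d \<le> n" by (simp only: of_nat_less_iff)
  define j where "j = nat i"
  have ij: "i = int j" using assms(6) by (simp add: j_def)
  have j1: "j \<ge> 1" using assms(6) by (simp add: j_def)
  have "int (Suc j) \<le> int d" using assms(7) ij by simp
  hence jd: "Suc j \<le> d" by (simp only: of_nat_le_iff)
  show ?thesis
  proof (cases "j = 1")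
    case True
    have i1: "i = 1" using True ij by simp
    have n4: "n \<ge> 4" using nd jd True by linarith
    have m1: "grass_mult q n (int (Suc 0)) = Q * (Q ^ (n - 1) - 1) / (Q - 1)"
      using gm_Suc[OF assms(2), of 0 n] n4 by (simp add: Q_def gauss_binom_def)
    have m2: "grass_mult q n (int (Suc 1)) = (Q^n - 1)/(Q - 1) * Q^2 * (Q ^ (n - 3) - 1) / (Q^2 - 1)"
      using gm_Suc[OF assms(2), of 1 n] n4 by (simp add: Q_def gauss_binom_def power2_eq_square)
    define S where "S = Q ^ (n - 1) - 1"
    define Sm where "Sm = Q ^ (n - 3) - 1"
    define Sp where "Sp = Q ^ (n + 1) - 1"
    define T where "T = Q ^ n - 1"
    have k: "Sp * Sm \<le> S^2"
    proof -
      have "n - 3 + 4 = n + 1" "n - 3 + 2 = n - 1" using n4 by auto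
      then show ?thesis using keyineq[of Q "n-3"] Q2 by (simp add: S_def Sm_def Sp_def)
    qed
    have Sm0: "Sm > 0" unfolding Sm_def using powge1[OF Q2, of "n-3"] n4 by simp
    have TS: "T \<le> Sp" unfolding T_def Sp_def using Q2 by (simp add: power_increasing)
    have T0: "T > 0" unfolding T_def using powge1[OF Q2, of n] assms(3) by simp
    have TSm: "T * Sm \<le> S^2" using k TS Sm0 by (meson less_imp_le mult_right_mono order.trans)
    have q1: "Q - 1 > 0" using Q2 by simp
    have "Q*Q \<ge> 2*2" using Q2 by (intro mult_mono) auto
    hence q3: "(Q-1)*(Q^2-1) > 0" using q1 by (simp add: power2_eq_square)
    have q2: "(Q-1)^2 \<le> (Q-1)*(Q^2-1)" using Q2 by (simp add: power2_eq_square mult_left_mono)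
    have "grass_mult q n (i-1) * grass_mult q n (i+1) = Q^2 * (T * Sm) / ((Q-1)*(Q^2-1))"
      using m2 i1 gm0 by (simp add: T_def Sm_def)
    also have "\<dots> \<le> Q^2 * S^2 / ((Q-1)*(Q^2-1))"
      using TSm q3 Q2 by (intro divide_right_mono mult_left_mono) auto
    also have "\<dots> \<le> Q^2 * S^2 / (Q-1)^2"
      using q1 q2 by (intro divide_left_mono) auto
    also have "\<dots> = (grass_mult q n i)^2"
      using m1 i1 by (simp add: S_def power_divide power_mult_distrib)
    finally show ?thesis .
  next
    case False
    define k where "k = j - 2"
    have jk: "j = Suc (Suc k)" using j1 False by (simp add: k_def)
    have n6: "2*k + 6 \<le> n" using nd jd jk by linarith
    define g where "g = gauss_binom q n (int k)"
    define X where "X = Q ^ Suc k"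
    define a where "a = n - 2*k - 3"
    define S where "S = Q ^ a - 1"
    define Sm where "Sm = Q ^ (a-2) - 1"
    define Sp where "Sp = Q ^ (a+2) - 1"
    define R where "R = Q ^ (n-k) - 1"
    define R' where "R' = Q ^ (n - Suc k) - 1"
    define P0 where "P0 = X - 1"
    define P1 where "P1 = Q*X - 1"
    define P2 where "P2 = Q*Q*X - 1"
    have g0: "g > 0" unfolding g_def using gb_pos[OF assms(2)] n6 by simp
    have X0: "X > 0" unfolding X_def using Q2 by simp
    have P00: "P0 > 0" unfolding P0_def X_def using powge1[OF Q2, of "Suc k"] by simp
    have P10: "P1 > 0" unfolding P1_def X_def using powge1[OF Q2, of "Suc (Suc k)"] by simp
    have P12: "P1 \<le> P2" unfolding P1_def P2_def using Q2 X0 by simp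
    have RR: "R' \<le> R" unfolding R_def R'_def using Q2 by (simp add: power_increasing)
    have "n - Suc k \<ge> 1" using n6 by simp
    hence R'0: "R' \<ge> 0" unfolding R'_def using powge1[OF Q2, of "n - Suc k"] by simp
    have k: "Sp * Sm \<le> S^2"
    proof -
      have "a - 2 + 4 = a + 2" "a - 2 + 2 = a" using n6 a_def by auto
      then show ?thesis using keyineq[of Q "a-2"] Q2 by (simp add: S_def Sm_def Sp_def)
    qed
    have Sm0: "Sm \<ge> 0" unfolding Sm_def using Q2 by (simp add: one_le_power)
    have Sp0: "Sp \<ge> 0" unfolding Sp_def using Q2 by (simp only: diff_ge_0_iff_ge one_le_power)
    have G1: "gauss_binom q n (int (Suc k)) = g * R / P0"
      using gb_Suc[OF assms(2), of n k] by (simp add: g_def R_def P0_def X_def Q_def)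
    have G2: "gauss_binom q n (int (Suc (Suc k))) = g * R / P0 * R' / P1"
      using gb_Suc[OF assms(2), of n "Suc k"] G1 by (simp add: R'_def P1_def X_def Q_def)
    have mA: "grass_mult q n (i-1) = g * X * Sp / P0"
    proof -
      have "i - 1 = int (Suc k)" using ij jk by simp
      moreover have "n - 2*k - 1 = a + 2" using n6 a_def by simp
      ultimately show ?thesis using gm_Suc[OF assms(2), of k n] n6
        by (simp add: g_def X_def Sp_def P0_def Q_def)
    qed
    have mB: "grass_mult q n i = g * R / P0 * (Q*X) * S / P1"
    proof -
      have "i = int (Suc (Suc k))" using ij jk by simp
      moreover have "n - 2*Suc k - 1 = a" using n6 a_def by simp
      ultimately show ?thesis using gm_Suc[OF assms(2), of "Suc k" n] n6 G1
        by (simp add: X_def S_def P1_def Q_def)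
    qed
    have mC: "grass_mult q n (i+1) = g * R / P0 * R' / P1 * (Q*Q*X) * Sm / P2"
    proof -
      have "i + 1 = int (Suc (Suc (Suc k)))" using ij jk by simp
      moreover have "n - 2*Suc (Suc k) - 1 = a - 2" using n6 a_def by simp
      ultimately show ?thesis using gm_Suc[OF assms(2), of "Suc (Suc k)" n] n6 G2
        by (simp add: X_def Sm_def P2_def Q_def mult.assoc)
    qed
    define C where "C = g^2 * X^2 * Q^2 / (P0^2 * P1^2 * P2)"
    have P20: "P2 > 0" using P10 P12 by simp
    have C0: "C \<ge> 0" unfolding C_def using P00 P10 P20 by simp
    have e1: "grass_mult q n (i-1) * grass_mult q n (i+1) = C * (R * R' * (Sp * Sm) * P1)"
      unfolding mA mC C_def using P00 P10 P20 by (intro e1) auto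
    have e2: "(grass_mult q n i)^2 = C * (R * R * S^2 * P2)"
      unfolding mB C_def using P00 P10 P20 by (intro e2) auto
    have R0: "R \<ge> 0" using RR R'0 by simp
    have "R * R' * (Sp * Sm) * P1 \<le> R * R * S^2 * P2"
    proof -
      have "R * R' \<le> R * R" using RR R0 by (simp add: mult_left_mono)
      moreover have "(Sp * Sm) * P1 \<le> S^2 * P2"
        using k P12 P10 Sp0 Sm0 by (rule m)
      ultimately have "(R * R') * ((Sp * Sm) * P1) \<le> (R * R) * (S^2 * P2)"
        using R0 R'0 Sp0 Sm0 P10 by (rule_tac mult_mono) auto
      then show ?thesis by (simp add: mult.assoc)
    qed
    then show ?thesis unfolding e1 e2 using C0 by (simp add: mult_left_mono)
  qed
qed

end
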